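(* If $N$ is odd and divisible by $3$, then $\rho(2/3,N)=2/9$.
   Context: For an integer $N\ge 2$ and $f:\mathbb{Z}_N\to\mathbb{C}$, define $\mathbb{E}(f)=\frac1N\sum_{n\in\mathbb{Z}_N} f(n)$ and $\Lambda_3(f)=\frac{1}{N^2}\sum_{n,d\in\mathbb{Z}_N} f(n)f(n+d)f(n+2d)$. For $\upsilon\in(0,1]$, $\rho(\upsilon,N)=\min\{\Lambda_3(f): f:\mathbb{Z}_N\to[0,1],\ \mathbb{E}(f)\ge\upsilon\}$. *)

theory Defs
  imports Complex_Main
begin

text \<open>Z_N is modelled by the residues {0..<N} with arithmetic mod N; a function
  f : Z_N -> C is a function on nat of which only the values on {0..<N} matter.\<close>

definition avgN :: "nat \<Rightarrow> (nat \<Rightarrow> real) \<Rightarrow> real" where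
  "avgN N f = (\<Sum>n<N. f n) / real N"

definition Lambda3 :: "nat \<Rightarrow> (nat \<Rightarrow> real) \<Rightarrow> real" where
  "Lambda3 N f = (\<Sum>n<N. \<Sum>d<N. f n * f ((n + d) mod N) * f ((n + 2 * d) mod N)) / (real N)^2"

definition rho_vals :: "real \<Rightarrow> nat \<Rightarrow> real set" where
  "rho_vals v N = {Lambda3 N f | f. (\<forall>n<N. 0 \<le> f n \<and> f n \<le> 1) \<and> avgN N f \<ge> v}"

text \<open>The paper's minimum; the minimum exists by compactness, so it equals the infimum.\<close>
definition rho :: "real \<Rightarrow> nat \<Rightarrow> real" where
  "rho v N = Inf (rho_vals v N)"

end

theory Submission
  imports Defs "HOL-Number_Theory.Cong"
begin

lemma reindex_lin:
  fixes h :: "nat \<Rightarrow> real"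
  assumes cop: "coprime k N"
  shows "(\<Sum>x<N. h ((c + k*x) mod N)) = (\<Sum>m<N. h m)"
proof (cases "N = 0")
  case True then show ?thesis by simp
next
  case False
  define \<sigma> where "\<sigma> x = (c + k*x) mod N" for x
  have inj: "inj_on \<sigma> {..<N}"
  proof (rule inj_onI)
    fix x y assume x: "x \<in> {..<N}" and y: "y \<in> {..<N}" and e: "\<sigma> x = \<sigma> y"
    have "[c + k*x = c + k*y] (mod N)" using e by (simp add: \<sigma>_def cong_def)
    then have "[k*x = k*y] (mod N)" by (simp add: cong_add_lcancel_nat)
    then have "[x = y] (mod N)" using cong_mult_lcancel_nat[OF cop] by simp
    then show "x = y" using x y by (simp add: cong_def)
  qed
  have sub: "\<sigma> ` {..<N} \<subseteq> {..<N}" using False by (auto simp: \<sigma>_def)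
  have im: "\<sigma> ` {..<N} = {..<N}" by (rule endo_inj_surj[OF _ sub inj]) simp
  have "(\<Sum>m<N. h m) = sum h (\<sigma> ` {..<N})" using im by simp
  also have "\<dots> = (\<Sum>x<N. h (\<sigma> x))" by (simp add: sum.reindex[OF inj])
  finally show ?thesis by (simp add: \<sigma>_def)
qed

lemma pt_ineq:
  fixes a b c :: real
  assumes "0 \<le> a" "a \<le> 1" "0 \<le> b" "b \<le> 1" "0 \<le> c" "c \<le> 1"
  shows "a*b*c \<ge> 1 - (1-a) - (1-b) - (1-c) + (1-a)*(1-c) + (1-b)*(1-c)"
proof -
  have "0 \<le> (1-a)*(1-b)*c" using assms by simp
  then show ?thesis by (simp add: algebra_simps)
qed

lemma lower:
  fixes f :: "nat \<Rightarrow> real" and N :: nat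
  assumes odd: "odd N" and bnd: "\<forall>n<N. 0 \<le> f n \<and> f n \<le> 1"
    and avg: "(\<Sum>n<N. f n) \<ge> 2/3 * real N"
  shows "(\<Sum>n<N. \<Sum>d<N. f n * f ((n + d) mod N) * f ((n + 2 * d) mod N)) \<ge> 2/9 * (real N)^2"
proof -
  have Npos: "N > 0" using odd by (cases N) auto
  define g where "g n = 1 - f n" for n
  define S where "S = (\<Sum>n<N. g n)"
  have cop1: "coprime (1::nat) N" by simp
  have cop2: "coprime (2::nat) N" using odd by simp
  have gb: "\<And>n. n < N \<Longrightarrow> 0 \<le> g n \<and> g n \<le> 1" using bnd by (auto simp: g_def)
  have modlt: "\<And>x. x mod N < N" using Npos by simp
  have S_eq: "S = real N - (\<Sum>n<N. f n)" by (simp add: S_def g_def sum_subtractf)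
  define R where "R n d = 1 - g n - g ((n + d) mod N) - g ((n + 2*d) mod N)
      + g n * g ((n + 2*d) mod N) + g ((n + d) mod N) * g ((n + 2*d) mod N)" for n d
  have pt: "\<And>n d. n < N \<Longrightarrow> R n d \<le> f n * f ((n + d) mod N) * f ((n + 2 * d) mod N)"
  proof -
    fix n d assume n: "n < N"
    show "R n d \<le> f n * f ((n + d) mod N) * f ((n + 2 * d) mod N)"
      unfolding R_def g_def
      using pt_ineq[of "f n" "f ((n + d) mod N)" "f ((n + 2 * d) mod N)"] bnd n modlt by auto
  qed
  have sh1: "\<And>n. (\<Sum>d<N. g ((n + d) mod N)) = S"
    using reindex_lin[OF cop1, of g] by (simp add: S_def)
  have sh2: "\<And>n. (\<Sum>d<N. g ((n + 2*d) mod N)) = S"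
    using reindex_lin[OF cop2, of g] by (simp add: S_def)
  have s1: "(\<Sum>n<N. \<Sum>d<N. (1::real)) = (real N)^2" by (simp add: power2_eq_square)
  have s2: "(\<Sum>n<N. \<Sum>d<N. g n) = real N * S" by (simp add: S_def sum_distrib_left mult.commute)
  have s3: "(\<Sum>n<N. \<Sum>d<N. g ((n + d) mod N)) = real N * S" by (simp add: sh1)
  have s4: "(\<Sum>n<N. \<Sum>d<N. g ((n + 2*d) mod N)) = real N * S" by (simp add: sh2)
  have s5: "(\<Sum>n<N. \<Sum>d<N. g n * g ((n + 2*d) mod N)) = S^2"
  proof -
    have "(\<Sum>n<N. \<Sum>d<N. g n * g ((n + 2*d) mod N)) = (\<Sum>n<N. g n * (\<Sum>d<N. g ((n + 2*d) mod N)))"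
      by (simp only: sum_distrib_left)
    also have "\<dots> = (\<Sum>n<N. g n * S)" by (simp only: sh2)
    also have "\<dots> = S * S" by (simp only: sum_distrib_right S_def)
    finally show ?thesis by (simp add: power2_eq_square)
  qed
  have s6: "(\<Sum>n<N. \<Sum>d<N. g ((n + d) mod N) * g ((n + 2*d) mod N)) = S^2"
  proof -
    have inner: "(\<Sum>n<N. g ((n + d) mod N) * g ((n + 2*d) mod N)) = (\<Sum>m<N. g m * g ((m + d) mod N))" for d
    proof -
      have "(\<Sum>n<N. g ((n + d) mod N) * g ((n + 2*d) mod N))
          = (\<Sum>n<N. (\<lambda>m. g m * g ((m + d) mod N)) ((d + 1*n) mod N))"
      proof (rule sum.cong[OF refl])
        fix n
        have e1: "((n + d) mod N + d) mod N = (n + d + d) mod N" by (rule mod_add_left_eq)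
        have e2: "n + d + d = n + 2*d" by simp
        have e3: "d + 1 * n = n + d" by simp
        show "g ((n + d) mod N) * g ((n + 2*d) mod N) = (\<lambda>m. g m * g ((m + d) mod N)) ((d + 1*n) mod N)"
          by (simp only: e3 e1 e2)
      qed
      also have "\<dots> = (\<Sum>m<N. g m * g ((m + d) mod N))" by (rule reindex_lin[OF cop1])
      finally show ?thesis .
    qed
    have "(\<Sum>n<N. \<Sum>d<N. g ((n + d) mod N) * g ((n + 2*d) mod N))
        = (\<Sum>d<N. \<Sum>n<N. g ((n + d) mod N) * g ((n + 2*d) mod N))" by (rule sum.swap)
    also have "\<dots> = (\<Sum>d<N. \<Sum>m<N. g m * g ((m + d) mod N))" by (simp add: inner)
    also have "\<dots> = (\<Sum>m<N. \<Sum>d<N. g m * g ((m + d) mod N))" by (rule sum.swap)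
    also have "\<dots> = (\<Sum>m<N. g m * (\<Sum>d<N. g ((m + d) mod N)))"
      by (simp only: sum_distrib_left)
    also have "\<dots> = (\<Sum>m<N. g m * S)" by (simp only: sh1)
    also have "\<dots> = S * S" by (simp only: sum_distrib_right S_def)
    also have "\<dots> = S^2" by (simp add: power2_eq_square)
    finally show ?thesis .
  qed
  have sumR: "(\<Sum>n<N. \<Sum>d<N. R n d) = (real N)^2 - 3 * real N * S + 2 * S^2"
  proof -
    have "(\<Sum>n<N. \<Sum>d<N. R n d) = (\<Sum>n<N. \<Sum>d<N. (1::real)) - (\<Sum>n<N. \<Sum>d<N. g n)
       - (\<Sum>n<N. \<Sum>d<N. g ((n + d) mod N)) - (\<Sum>n<N. \<Sum>d<N. g ((n + 2*d) mod N))
       + (\<Sum>n<N. \<Sum>d<N. g n * g ((n + 2*d) mod N))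
       + (\<Sum>n<N. \<Sum>d<N. g ((n + d) mod N) * g ((n + 2*d) mod N))"
      by (simp only: R_def sum.distrib sum_subtractf)
    then show ?thesis unfolding s1 s2 s3 s4 s5 s6 by simp
  qed
  have "(\<Sum>n<N. \<Sum>d<N. R n d) \<le> (\<Sum>n<N. \<Sum>d<N. f n * f ((n + d) mod N) * f ((n + 2 * d) mod N))"
    by (intro sum_mono) (auto intro: pt)
  moreover have "2/9 * (real N)^2 \<le> (real N)^2 - 3 * real N * S + 2 * S^2"
  proof -
    have h1: "S \<le> real N / 3" using S_eq avg by simp
    have h2: "(real N)^2 - 3 * real N * S + 2 * S^2 = (real N - S) * (real N - 2*S)"
      by (simp add: algebra_simps power2_eq_square)
    have "2/9 * (real N)^2 = (2/3 * real N) * (real N / 3)" by (simp add: power2_eq_square)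
    also have "\<dots> \<le> (real N - S) * (real N - 2*S)"
      by (rule mult_mono) (use h1 in auto)
    finally show ?thesis using h2 by simp
  qed
  ultimately show ?thesis using sumR by linarith
qed

definition f0 :: "nat \<Rightarrow> real" where "f0 n = (if n mod 3 = 0 then 0 else 1)"
definition e0 :: "nat \<Rightarrow> real" where "e0 n = (if n mod 3 = 0 then 1 else 0)"

lemma sum_f0: "(\<Sum>n<3*M. f0 n) = 2 * real M"
proof (induction M)
  case 0 then show ?case by simp
next
  case (Suc M)
  have "{..<3 * Suc M} = {..<3*M} \<union> {3*M, 3*M+1, 3*M+2}" by auto
  then have "(\<Sum>n<3*Suc M. f0 n) = (\<Sum>n<3*M. f0 n) + f0 (3*M) + f0 (3*M+1) + f0 (3*M+2)"
    by (simp add: sum.union_disjoint)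
  also have "\<dots> = 2 * real M + 2" proof -
    have "(3*M) mod 3 = 0" "(3*M+1) mod 3 = 1" "(3*M+2) mod 3 = 2" by presburger+
    then have "f0 (3*M) = 0" "f0 (3*M+1) = 1" "f0 (3*M+2) = 1" by (simp_all only: f0_def) simp_all
    then show ?thesis using Suc by simp
  qed
  finally show ?case by simp
qed

lemma sum_e0: "(\<Sum>n<3*M. e0 n) = real M"
proof (induction M)
  case 0 then show ?case by simp
next
  case (Suc M)
  have "{..<3 * Suc M} = {..<3*M} \<union> {3*M, 3*M+1, 3*M+2}" by auto
  then have "(\<Sum>n<3*Suc M. e0 n) = (\<Sum>n<3*M. e0 n) + e0 (3*M) + e0 (3*M+1) + e0 (3*M+2)"
    by (simp add: sum.union_disjoint)
  also have "\<dots> = real M + 1" proof -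
    have "(3*M) mod 3 = 0" "(3*M+1) mod 3 = 1" "(3*M+2) mod 3 = 2" by presburger+
    then have "e0 (3*M) = 1" "e0 (3*M+1) = 0" "e0 (3*M+2) = 0" by (simp_all only: e0_def) simp_all
    then show ?thesis using Suc by simp
  qed
  finally show ?case by simp
qed

lemma f0_pt:
  assumes "3 dvd N"
  shows "f0 n * f0 ((n + d) mod N) * f0 ((n + 2 * d) mod N) = f0 n * e0 d"
proof -
  have m1: "((n + d) mod N) mod 3 = (n mod 3 + d mod 3) mod 3"
  proof -
    have "((n + d) mod N) mod 3 = (n + d) mod 3" using assms by (rule mod_mod_cancel)
    also have "\<dots> = (n mod 3 + d mod 3) mod 3" by (rule mod_add_eq[symmetric])
    finally show ?thesis .
  qed
  have m2: "((n + 2*d) mod N) mod 3 = (n mod 3 + 2 * (d mod 3)) mod 3"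
  proof -
    have "((n + 2*d) mod N) mod 3 = (n + 2*d) mod 3" using assms by (rule mod_mod_cancel)
    also have "\<dots> = (n mod 3 + (2*d) mod 3) mod 3" by (rule mod_add_eq[symmetric])
    also have "\<dots> = (n mod 3 + (2*(d mod 3)) mod 3) mod 3" by (simp only: mod_mult_right_eq)
    also have "\<dots> = (n mod 3 + 2*(d mod 3)) mod 3" by (rule mod_add_right_eq)
    finally show ?thesis .
  qed
  have key: "\<And>a b::nat. a < 3 \<Longrightarrow> b < 3 \<Longrightarrow>
     (if a = 0 then 0 else 1) * (if (a + b) mod 3 = 0 then 0 else 1) * (if (a + 2*b) mod 3 = 0 then 0 else 1)
     = (if a = 0 then 0 else (1::real)) * (if b = 0 then 1 else 0)"
  proof -
    fix a b :: nat assume "a < 3" "b < 3"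
    then have "a = 0 \<or> a = 1 \<or> a = 2" "b = 0 \<or> b = 1 \<or> b = 2" by auto
    then show "(if a = 0 then 0 else 1) * (if (a + b) mod 3 = 0 then 0 else 1) * (if (a + 2*b) mod 3 = 0 then 0 else 1)
     = (if a = 0 then 0 else (1::real)) * (if b = 0 then 1 else 0)" by (elim disjE) simp_all
  qed
  show ?thesis unfolding f0_def e0_def m1 m2 by (rule key) simp_all
qed

theorem mainTheorem10:
  fixes N :: nat
  assumes "N \<ge> 2" and "odd N" and "3 dvd N"
  shows "rho (2/3) N = 2/9"
proof -
  obtain M where M: "N = 3*M" using assms(3) by blast
  have Mpos: "M > 0" using assms(1) M by (cases M) auto
  have mem: "2/9 \<in> rho_vals (2/3) N"
  proof -
    have "avgN N f0 = 2/3" using M Mpos by (simp add: avgN_def sum_f0)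
    moreover have "Lambda3 N f0 = 2/9"
    proof -
      have "(\<Sum>n<N. \<Sum>d<N. f0 n * f0 ((n + d) mod N) * f0 ((n + 2 * d) mod N))
          = (\<Sum>n<N. \<Sum>d<N. f0 n * e0 d)" using f0_pt[OF assms(3)] by presburger
      also have "\<dots> = (\<Sum>n<N. f0 n) * (\<Sum>d<N. e0 d)" by (simp add: sum_product)
      also have "\<dots> = 2 * real M * real M" using M by (simp add: sum_f0 sum_e0)
      finally show ?thesis using M Mpos by (simp add: Lambda3_def power2_eq_square)
    qed
    moreover have "\<forall>n<N. 0 \<le> f0 n \<and> f0 n \<le> 1" by (simp add: f0_def)
    ultimately show ?thesis unfolding rho_vals_def mem_Collect_eq by (intro exI[of _ f0]) simp
  qed
  have lb: "2/9 \<le> x" if "x \<in> rho_vals (2/3) N" for x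
  proof -
    have "\<exists>f. x = Lambda3 N f \<and> (\<forall>n<N. 0 \<le> f n \<and> f n \<le> 1) \<and> avgN N f \<ge> 2/3"
      using that unfolding rho_vals_def by blast
    then obtain f where f: "x = Lambda3 N f" "\<forall>n<N. 0 \<le> f n \<and> f n \<le> 1" "avgN N f \<ge> 2/3"
      by blast
    have Np: "real N > 0" using assms(1) by simp
    have "(\<Sum>n<N. f n) \<ge> 2/3 * real N" using f(3) Np by (simp add: avgN_def field_simps)
    from lower[OF assms(2) f(2) this]
    have "2/9 * (real N)^2 \<le> (\<Sum>n<N. \<Sum>d<N. f n * f ((n + d) mod N) * f ((n + 2 * d) mod N))" .
    moreover have "x = (\<Sum>n<N. \<Sum>d<N. f n * f ((n + d) mod N) * f ((n + 2 * d) mod N)) / (real N)^2"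
      using f(1) by (simp add: Lambda3_def)
    moreover have "(real N)^2 > 0" using Np by simp
    ultimately show ?thesis by (simp add: pos_le_divide_eq)
  qed
  show ?thesis unfolding rho_def by (rule cInf_eq_minimum[OF mem lb])
qed

end
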